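(* Let $d\ge3$. There exists a constant $c_d$ depending only on $d$ such that for any integer $n\ge1$, any $\delta>0$ and any function $f:\mathbb{Z}^d\to\mathbb{R}^+$, $$\sum_{\underline x\in\mathbb{Z}^d\setminus\underline X(f,\delta)}\ \sum_{y\in B(\underline x)}f(y)^{2^*}\le c_d\big(\delta^{2^*}n^{d+2^*}\big)^{1-2/2^*}\Big(\frac1{n^2}\|f\|_2^2+\mathcal{E}(f)\Big).$$
   Context: $2^*=2d/(d-2)$. $\Lambda(r)=\{x\in\mathbb{R}^d:-r/2<x_i\le r/2,\ 1\le i\le d\}$. For $\underline x\in\mathbb{Z}^d$, the block $B(\underline x)=(n\underline x+\Lambda(n))\cap\mathbb{Z}^d$. $\underline X(f,\delta)=\{\underline x\in\mathbb{Z}^d:\sum_{y\in B(\underline x)}f(y)^{2^*}\ge\delta^{2^*}n^{d+2^*}\}$. $\|f\|_2^2=\sum_{x\in\mathbb{Z}^d}f(x)^2$ and $\mathcal{E}(f)=\frac1{2d}\sum_{y,z\in\mathbb{Z}^d,|y-z|=1}(f(y)-f(z))^2$ (ordered pairs). *)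

theory Defs
  imports "HOL-Analysis.Analysis"
begin

text \<open>Points of Z^d are functions 'd \<Rightarrow> int for a finite index type 'd; d = CARD('d).\<close>

definition crit_exp :: "nat \<Rightarrow> real" where
  "crit_exp d = 2 * real d / (real d - 2)"

definition cube :: "real \<Rightarrow> ('d::finite \<Rightarrow> real) set" where
  "cube r = {x. \<forall>i. - r / 2 < x i \<and> x i \<le> r / 2}"

definition block :: "nat \<Rightarrow> ('d::finite \<Rightarrow> int) \<Rightarrow> ('d \<Rightarrow> int) set" where
  "block n x = {y. (\<lambda>i. real_of_int (y i) - real n * real_of_int (x i)) \<in> cube (real n)}"

definition block_mass :: "nat \<Rightarrow> (('d::finite \<Rightarrow> int) \<Rightarrow> real) \<Rightarrow> ('d \<Rightarrow> int) \<Rightarrow> real" where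
  "block_mass n f x = (\<Sum>y\<in>block n x. f y powr crit_exp CARD('d))"

definition Xset :: "nat \<Rightarrow> (('d::finite \<Rightarrow> int) \<Rightarrow> real) \<Rightarrow> real \<Rightarrow> ('d \<Rightarrow> int) set" where
  "Xset n f \<delta> = {x. block_mass n f x \<ge> \<delta> powr crit_exp CARD('d) * real n powr (real CARD('d) + crit_exp CARD('d))}"

definition lattice_nbr :: "('d::finite \<Rightarrow> int) \<Rightarrow> ('d \<Rightarrow> int) \<Rightarrow> bool" where
  "lattice_nbr y z \<longleftrightarrow> (\<Sum>i\<in>UNIV. (y i - z i)\<^sup>2) = 1"

definition l2sq :: "(('d::finite \<Rightarrow> int) \<Rightarrow> real) \<Rightarrow> ennreal" where
  "l2sq f = (\<Sum>\<^sub>\<infinity>x\<in>UNIV. ennreal ((f x)\<^sup>2))"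

definition energy :: "(('d::finite \<Rightarrow> int) \<Rightarrow> real) \<Rightarrow> ennreal" where
  "energy f = ennreal (1 / (2 * real CARD('d))) *
     (\<Sum>\<^sub>\<infinity>p\<in>{(y, z). lattice_nbr y z}. ennreal ((f (fst p) - f (snd p))\<^sup>2))"

end

theory Submission
  imports Defs
begin


definition avgc :: "('d::finite \<Rightarrow> int) \<Rightarrow> nat \<Rightarrow> 'd \<Rightarrow> (('d \<Rightarrow> int) \<Rightarrow> real) \<Rightarrow> ('d \<Rightarrow> int) \<Rightarrow> real" where
  "avgc a n i h y = (\<Sum>t\<in>{a i<..a i + int n}. h (y(i:=t))) / real n"

definition indepS :: "'d set \<Rightarrow> (('d \<Rightarrow> int) \<Rightarrow> real) \<Rightarrow> bool" where
  "indepS J h \<longleftrightarrow> (\<forall>y z. (\<forall>i. i \<notin> J \<longrightarrow> y i = z i) \<longrightarrow> h y = h z)"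

definition Elist :: "('d::finite \<Rightarrow> int) \<Rightarrow> nat \<Rightarrow> 'd list \<Rightarrow> (('d \<Rightarrow> int) \<Rightarrow> real) \<Rightarrow> ('d \<Rightarrow> int) \<Rightarrow> real" where
  "Elist a n ks h = foldr (\<lambda>k g. avgc a n k g) ks h"

lemma Elist_Nil[simp]: "Elist a n [] h = h" by (simp add: Elist_def)
lemma Elist_Cons[simp]: "Elist a n (k#ks) h = avgc a n k (Elist a n ks h)" by (simp add: Elist_def)

lemma indepS_mono: assumes "indepS K h" "J \<subseteq> K" shows "indepS J h"
  unfolding indepS_def
proof (intro allI impI)
  fix y z :: "'a \<Rightarrow> int" assume yz: "\<forall>i. i \<notin> J \<longrightarrow> y i = z i"
  then have "\<forall>i. i \<notin> K \<longrightarrow> y i = z i" using assms(2) by auto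
  then show "h y = h z" using assms(1) unfolding indepS_def by blast
qed

lemma avgc_indep: assumes "indepS J h" shows "indepS (insert k J) (avgc a n k h)"
  unfolding indepS_def
proof (intro allI impI)
  fix y z :: "'a \<Rightarrow> int" assume yz: "\<forall>i. i \<notin> insert k J \<longrightarrow> y i = z i"
  have "\<And>t. h (y(k:=t)) = h (z(k:=t))"
  proof -
    fix t
    have "\<forall>i. i \<notin> J \<longrightarrow> (y(k:=t)) i = (z(k:=t)) i" using yz by auto
    then show "h (y(k:=t)) = h (z(k:=t))" using assms unfolding indepS_def by simp
  qed
  then show "avgc a n k h y = avgc a n k h z" unfolding avgc_def by simp
qed

lemma Elist_indep: "indepS J h \<Longrightarrow> indepS (J \<union> set ks) (Elist a n ks h)"
proof (induction ks)
  case Nil then show ?case by simp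
next
  case (Cons k ks)
  then have "indepS (insert k (J \<union> set ks)) (avgc a n k (Elist a n ks h))"
    by (intro avgc_indep) simp
  then show ?case by simp
qed

lemma indep_upd: assumes "indepS {k} h" shows "h (y(k:=t)) = h y"
proof -
  have "\<forall>i. i \<notin> {k} \<longrightarrow> (y(k:=t)) i = y i" by simp
  then show ?thesis using assms unfolding indepS_def by simp
qed

lemma avgc_indep_self: "indepS {k} h \<Longrightarrow> n \<ge> 1 \<Longrightarrow> avgc a n k h y = h y"
  unfolding avgc_def by (simp add: indep_upd)

lemma avgc_mono: "(\<And>y. h y \<le> g y) \<Longrightarrow> avgc a n k h y \<le> avgc a n k g y"
  unfolding avgc_def by (intro divide_right_mono sum_mono) auto

lemma avgc_nonneg: "(\<And>y. h y \<ge> 0) \<Longrightarrow> avgc a n k h y \<ge> 0"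
  unfolding avgc_def by (intro divide_nonneg_nonneg sum_nonneg) auto

lemma Elist_nonneg: "(\<And>y. h y \<ge> 0) \<Longrightarrow> Elist a n ks h y \<ge> 0"
  by (induction ks arbitrary: y) (auto intro: avgc_nonneg)

lemma holder_avg:
  fixes x :: "'i \<Rightarrow> 't \<Rightarrow> real"
  assumes S: "finite S" "S \<noteq> {}" and T: "finite T" "T \<noteq> {}"
    and nn: "\<And>i t. x i t \<ge> 0"
  shows "(\<Sum>t\<in>T. \<Prod>i\<in>S. x i t powr (1/card S)) / card T
         \<le> (\<Prod>i\<in>S. ((\<Sum>t\<in>T. x i t) / card T) powr (1/card S))"
proof (cases "\<exists>i\<in>S. (\<Sum>t\<in>T. x i t) = 0")
  case True
  then obtain j where j: "j \<in> S" "(\<Sum>t\<in>T. x j t) = 0" by blast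
  then have "\<And>t. t \<in> T \<Longrightarrow> x j t = 0" using T nn by (simp add: sum_nonneg_eq_0_iff)
  then have "\<And>t. t \<in> T \<Longrightarrow> (\<Prod>i\<in>S. x i t powr (1/card S)) = 0"
    using j S(1) by (auto simp: prod_zero_iff intro!: bexI[of _ j])
  then have "(\<Sum>t\<in>T. \<Prod>i\<in>S. x i t powr (1/card S)) = 0" by simp
  then show ?thesis by (simp add: prod_nonneg)
next
  case False
  define A where "A i = (\<Sum>t\<in>T. x i t) / card T" for i
  have Apos: "A i > 0" if "i \<in> S" for i
  proof -
    have "(\<Sum>t\<in>T. x i t) \<ge> 0" using nn by (simp add: sum_nonneg)
    moreover have "(\<Sum>t\<in>T. x i t) \<noteq> 0" using False that by blast
    moreover have "card T > 0" using T by (simp add: card_gt_0_iff)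
    ultimately show ?thesis unfolding A_def by simp
  qed
  define PA where "PA = (\<Prod>i\<in>S. A i powr (1/card S))"
  have PA0: "PA \<ge> 0" unfolding PA_def by (simp add: prod_nonneg)
  have pt: "(\<Prod>i\<in>S. x i t powr (1/card S)) \<le> PA * (\<Sum>i\<in>S. (x i t / A i) / card S)" for t
  proof -
    have "(\<Prod>i\<in>S. x i t powr (1/card S)) = (\<Prod>i\<in>S. A i powr (1/card S) * (x i t / A i) powr (1/card S))"
    proof (rule prod.cong[OF refl])
      fix i assume "i \<in> S"
      then have eq: "A i * (x i t / A i) = x i t" using Apos[of i] by simp
      show "x i t powr (1/card S) = A i powr (1/card S) * (x i t / A i) powr (1/card S)"
        by (simp only: powr_mult[symmetric] eq)
    qed
    also have "\<dots> = PA * (\<Prod>i\<in>S. x i t / A i) powr (1/card S)"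
      unfolding PA_def prod.distrib prod_powr_distrib ..
    also have "\<dots> \<le> PA * (\<Sum>i\<in>S. (x i t / A i) / card S)"
      by (intro mult_left_mono PA0 arith_geom_mean S) (use nn Apos in \<open>auto intro: divide_nonneg_pos\<close>)
    finally show ?thesis .
  qed
  have "(\<Sum>t\<in>T. \<Prod>i\<in>S. x i t powr (1/card S)) / card T \<le> (\<Sum>t\<in>T. PA * (\<Sum>i\<in>S. (x i t / A i) / card S)) / card T"
    by (intro divide_right_mono sum_mono pt) auto
  also have "\<dots> = PA * (\<Sum>i\<in>S. (\<Sum>t\<in>T. x i t) / A i / card S) / card T"
  proof -
    have "(\<Sum>t\<in>T. PA * (\<Sum>i\<in>S. x i t / A i / card S)) = PA * (\<Sum>t\<in>T. \<Sum>i\<in>S. x i t / A i / card S)"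
      by (simp add: sum_distrib_left)
    also have "(\<Sum>t\<in>T. \<Sum>i\<in>S. x i t / A i / card S) = (\<Sum>i\<in>S. \<Sum>t\<in>T. x i t / A i / card S)"
      by (rule sum.swap)
    also have "\<dots> = (\<Sum>i\<in>S. (\<Sum>t\<in>T. x i t) / A i / card S)"
      by (simp add: sum_divide_distrib)
    finally show ?thesis by simp
  qed
  also have "\<dots> = PA"
  proof -
    have "(\<Sum>i\<in>S. (\<Sum>t\<in>T. x i t) / A i / card S) = (\<Sum>i\<in>S. card T / card S)"
    proof (rule sum.cong[OF refl])
      fix i assume "i \<in> S"
      have "(\<Sum>t\<in>T. x i t) = A i * card T" using T unfolding A_def by simp
      then show "(\<Sum>t\<in>T. x i t) / A i / card S = card T / card S" using Apos[OF \<open>i \<in> S\<close>] by simp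
    qed
    moreover have "PA * (\<Sum>i\<in>S. real (card T) / card S) / card T = PA" using S T by simp
    ultimately show ?thesis by simp
  qed
  finally show ?thesis unfolding PA_def A_def by simp
qed



definition boxQ :: "('d::finite \<Rightarrow> int) \<Rightarrow> nat \<Rightarrow> ('d \<Rightarrow> int) set" where
  "boxQ a n = {y. \<forall>i. a i < y i \<and> y i \<le> a i + int n}"

lemma boxQ_PiE: "boxQ a n = (\<Pi>\<^sub>E i\<in>UNIV. {a i<..a i + int n})"
  unfolding boxQ_def PiE_UNIV_domain by auto

lemma finite_boxQ: "finite (boxQ a n)"
  unfolding boxQ_PiE by (intro finite_PiE) auto

lemma card_boxQ: "card (boxQ a n) = n ^ CARD('d)" for a :: "'d::finite \<Rightarrow> int"
  unfolding boxQ_PiE by (simp add: card_PiE)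

lemma upd_in_boxQ: "y \<in> boxQ a n \<Longrightarrow> t \<in> {a i<..a i + int n} \<Longrightarrow> y(i:=t) \<in> boxQ a n"
  unfolding boxQ_def by auto

lemma sum_avgc:
  assumes n: "n \<ge> 1"
  shows "(\<Sum>y\<in>boxQ a n. avgc a n i h y) = (\<Sum>y\<in>boxQ a n. h y)"
proof -
  let ?Q = "boxQ a n" and ?I = "{a i<..a i + int n}"
  have cI: "card ?I = n" by simp
  have "(\<Sum>y\<in>?Q. avgc a n i h y) = (\<Sum>y\<in>?Q. \<Sum>t\<in>?I. h (y(i:=t))) / n"
    unfolding avgc_def by (simp add: sum_divide_distrib)
  also have "(\<Sum>y\<in>?Q. \<Sum>t\<in>?I. h (y(i:=t))) = (\<Sum>p\<in>?Q \<times> ?I. h ((fst p)(i:=snd p)))"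
    by (simp add: sum.cartesian_product case_prod_beta)
  also have "\<dots> = (\<Sum>p\<in>?Q \<times> ?I. h (fst p))"
  proof (rule sum.reindex_bij_witness[where i = "\<lambda>p. ((fst p)(i:=snd p), fst p i)" and j = "\<lambda>p. ((fst p)(i:=snd p), fst p i)"])
    fix p assume p: "p \<in> ?Q \<times> ?I"
    then show "((fst ((fst p)(i := snd p), fst p i))(i := snd ((fst p)(i := snd p), fst p i)), fst ((fst p)(i := snd p), fst p i) i) = p"
      by (cases p) auto
    show "((fst p)(i := snd p), fst p i) \<in> ?Q \<times> ?I"
      using p by (cases p) (auto intro: upd_in_boxQ simp: boxQ_def)
    show "((fst ((fst p)(i := snd p), fst p i))(i := snd ((fst p)(i := snd p), fst p i)), fst ((fst p)(i := snd p), fst p i) i) = p"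
      using p by (cases p) auto
    show "((fst p)(i := snd p), fst p i) \<in> ?Q \<times> ?I"
      using p by (cases p) (auto intro: upd_in_boxQ simp: boxQ_def)
    show "h (fst ((fst p)(i := snd p), fst p i)) = h ((fst p)(i := snd p))" by simp
  qed
  also have "\<dots> = (\<Sum>y\<in>?Q. \<Sum>t\<in>?I. h y)"
    by (simp only: sum.cartesian_product' fst_conv)
  also have "\<dots> = n * (\<Sum>y\<in>?Q. h y)"
    by (simp add: sum_distrib_left)
  finally show ?thesis using n by simp
qed

lemma sum_Elist:
  assumes n: "n \<ge> 1"
  shows "(\<Sum>y\<in>boxQ a n. Elist a n ks h y) = (\<Sum>y\<in>boxQ a n. h y)"
  by (induction ks) (simp_all add: sum_avgc[OF n])

lemma indepS_empty: "indepS {} h"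
  unfolding indepS_def
proof (intro allI impI)
  fix y z :: "'a \<Rightarrow> int" assume "\<forall>i. i \<notin> {} \<longrightarrow> y i = z i"
  then have "y = z" by (intro ext) simp
  then show "h y = h z" by simp
qed

lemma Elist_const:
  assumes "set ks = UNIV"
  shows "Elist a n ks h y = Elist a n ks h z"
proof -
  have "indepS ({} \<union> set ks) (Elist a n ks h)" by (rule Elist_indep[OF indepS_empty])
  then show ?thesis using assms unfolding indepS_def by simp
qed

lemma sum_eq_card_Elist:
  assumes n: "n \<ge> 1" and ks: "set ks = UNIV"
  shows "(\<Sum>y\<in>boxQ a n. h y) = real (card (boxQ a n)) * Elist a n ks h z"
proof -
  have "(\<Sum>y\<in>boxQ a n. h y) = (\<Sum>y\<in>boxQ a n. Elist a n ks h y)"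
    by (rule sum_Elist[OF n, symmetric])
  also have "\<dots> = (\<Sum>y\<in>boxQ a n. Elist a n ks h z)"
    by (rule sum.cong[OF refl]) (rule Elist_const[OF ks])
  finally show ?thesis by simp
qed

lemma onestep:
  fixes H :: "'d::finite \<Rightarrow> ('d \<Rightarrow> int) \<Rightarrow> real"
  assumes n: "n \<ge> 1" and D: "CARD('d) \<ge> 2"
    and nn: "\<And>i y. H i y \<ge> 0" and ind: "indepS {k} (H k)"
  shows "avgc a n k (\<lambda>y. \<Prod>i\<in>UNIV. H i y powr (1 / (real CARD('d) - 1))) y
         \<le> (\<Prod>i\<in>UNIV. (avgc a n k (H i) y) powr (1 / (real CARD('d) - 1)))"
proof -
  let ?w = "1 / (real CARD('d) - 1)" and ?I = "{a k<..a k + int n}" and ?S = "UNIV - {k}"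
  have cS: "card ?S = CARD('d) - 1" by (simp add: card_Diff_singleton)
  have w: "?w = 1 / card ?S" using D cS by (simp add: of_nat_diff)
  have Sne: "?S \<noteq> {}"
  proof -
    have c: "card ?S \<noteq> 0" using cS D by simp
    show ?thesis using c by (metis card_gt_0_iff gr0I)
  qed
  have split: "(\<Prod>i\<in>UNIV. G i) = G k * (\<Prod>i\<in>?S. G i)" for G :: "'d \<Rightarrow> real"
    by (simp add: prod.remove[of UNIV k])
  have "avgc a n k (\<lambda>y. \<Prod>i\<in>UNIV. H i y powr ?w) y
        = (\<Sum>t\<in>?I. H k y powr ?w * (\<Prod>i\<in>?S. H i (y(k:=t)) powr ?w)) / n"
    unfolding avgc_def split using indep_upd[OF ind] by simp
  also have "\<dots> = H k y powr ?w * ((\<Sum>t\<in>?I. \<Prod>i\<in>?S. H i (y(k:=t)) powr (1 / card ?S)) / card ?I)"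
    using w by (simp add: sum_distrib_left)
  also have "\<dots> \<le> H k y powr ?w * (\<Prod>i\<in>?S. ((\<Sum>t\<in>?I. H i (y(k:=t))) / card ?I) powr (1 / card ?S))"
    by (intro mult_left_mono holder_avg Sne) (use n nn in auto)
  also have "\<dots> = (\<Prod>i\<in>UNIV. (avgc a n k (H i) y) powr ?w)"
    unfolding split using avgc_indep_self[OF ind n] w by (simp add: avgc_def)
  finally show ?thesis .
qed



lemma LW_gen:
  fixes h :: "'d::finite \<Rightarrow> ('d \<Rightarrow> int) \<Rightarrow> real"
  assumes n: "n \<ge> 1" and D: "CARD('d) \<ge> 2"
    and nn: "\<And>i y. h i y \<ge> 0" and ind: "\<And>i. indepS {i} (h i)"
  shows "Elist a n ks (\<lambda>y. \<Prod>i\<in>UNIV. h i y powr (1 / (real CARD('d) - 1))) y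
         \<le> (\<Prod>i\<in>UNIV. (Elist a n ks (h i) y) powr (1 / (real CARD('d) - 1)))"
proof (induction ks arbitrary: y)
  case Nil
  then show ?case by simp
next
  case (Cons k ks)
  let ?w = "1 / (real CARD('d) - 1)"
  have "Elist a n (k#ks) (\<lambda>y. \<Prod>i\<in>UNIV. h i y powr ?w) y
        = avgc a n k (Elist a n ks (\<lambda>y. \<Prod>i\<in>UNIV. h i y powr ?w)) y" by simp
  also have "\<dots> \<le> avgc a n k (\<lambda>y. \<Prod>i\<in>UNIV. (Elist a n ks (h i) y) powr ?w) y"
    by (rule avgc_mono) (rule Cons.IH)
  also have "\<dots> \<le> (\<Prod>i\<in>UNIV. (avgc a n k (Elist a n ks (h i)) y) powr ?w)"
  proof (rule onestep[OF n D])
    show "\<And>i y. 0 \<le> Elist a n ks (h i) y" by (rule Elist_nonneg) (rule nn)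
    have "indepS ({k} \<union> set ks) (Elist a n ks (h k))" by (rule Elist_indep[OF ind])
    then show "indepS {k} (Elist a n ks (h k))" by (rule indepS_mono) simp
  qed
  also have "\<dots> = (\<Prod>i\<in>UNIV. (Elist a n (k#ks) (h i) y) powr ?w)" by simp
  finally show ?case .
qed

definition edge_e :: "('d::finite \<Rightarrow> int) \<Rightarrow> nat \<Rightarrow> (('d \<Rightarrow> int) \<Rightarrow> real) \<Rightarrow> 'd \<Rightarrow> ('d \<Rightarrow> int) \<Rightarrow> real" where
  "edge_e a n g i z = (if z i < a i + int n then \<bar>g (z(i := z i + 1)) - g z\<bar> else 0)"

definition Wsum :: "('d::finite \<Rightarrow> int) \<Rightarrow> nat \<Rightarrow> (('d \<Rightarrow> int) \<Rightarrow> real) \<Rightarrow> real" where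
  "Wsum a n g = (\<Sum>i\<in>UNIV. \<Sum>y\<in>boxQ a n. edge_e a n g i y)"

lemma edge_e_nonneg: "edge_e a n g i z \<ge> 0"
  unfolding edge_e_def by simp

lemma tele0:
  fixes \<phi> :: "int \<Rightarrow> real"
  shows "\<bar>\<phi> (s + int k) - \<phi> s\<bar> \<le> (\<Sum>u\<in>{s..<s + int k}. \<bar>\<phi> (u+1) - \<phi> u\<bar>)"
proof (induction k)
  case 0
  then show ?case by simp
next
  case (Suc k)
  have set: "{s..<s + int (Suc k)} = insert (s + int k) {s..<s + int k}" by auto
  have "\<bar>\<phi> (s + int (Suc k)) - \<phi> s\<bar> \<le> \<bar>\<phi> (s + int k + 1) - \<phi> (s + int k)\<bar> + \<bar>\<phi> (s + int k) - \<phi> s\<bar>"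
  proof -
    have eq: "s + int (Suc k) = s + int k + 1" by simp
    show ?thesis unfolding eq
      using abs_triangle_ineq[of "\<phi> (s + int k + 1) - \<phi> (s + int k)" "\<phi> (s + int k) - \<phi> s"] by simp
  qed
  also have "\<dots> \<le> \<bar>\<phi> (s + int k + 1) - \<phi> (s + int k)\<bar> + (\<Sum>u\<in>{s..<s + int k}. \<bar>\<phi> (u+1) - \<phi> u\<bar>)"
    using Suc.IH by simp
  also have "\<dots> = (\<Sum>u\<in>{s..<s + int (Suc k)}. \<bar>\<phi> (u+1) - \<phi> u\<bar>)"
    unfolding set by simp
  finally show ?case .
qed

lemma tele:
  fixes \<phi> :: "int \<Rightarrow> real"
  assumes s: "s \<in> {b<..b + int n}" and t: "t \<in> {b<..b + int n}"
  shows "\<bar>\<phi> t - \<phi> s\<bar> \<le> (\<Sum>u\<in>{b<..b + int n}. if u < b + int n then \<bar>\<phi> (u+1) - \<phi> u\<bar> else 0)"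
proof -
  let ?psi = "\<lambda>u. if u < b + int n then \<bar>\<phi> (u+1) - \<phi> u\<bar> else 0"
  have gen: "\<bar>\<phi> t' - \<phi> s'\<bar> \<le> (\<Sum>u\<in>{b<..b + int n}. ?psi u)"
    if s': "s' \<in> {b<..b + int n}" and t': "t' \<in> {b<..b + int n}" and le: "s' \<le> t'" for s' t'
  proof -
    obtain k where k: "t' = s' + int k" using le by (metis zle_iff_zadd)
    have "\<bar>\<phi> t' - \<phi> s'\<bar> \<le> (\<Sum>u\<in>{s'..<t'}. \<bar>\<phi> (u+1) - \<phi> u\<bar>)"
      using tele0[of \<phi> s' k] k by simp
    also have "\<dots> = (\<Sum>u\<in>{s'..<t'}. ?psi u)"
      using t' by (intro sum.cong) auto
    also have "\<dots> \<le> (\<Sum>u\<in>{b<..b + int n}. ?psi u)"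
      using s' t' by (intro sum_mono2) auto
    finally show ?thesis .
  qed
  show ?thesis
  proof (cases "s \<le> t")
    case True
    then show ?thesis using gen[OF s t] by simp
  next
    case False
    then show ?thesis using gen[OF t s] by (simp add: abs_minus_commute)
  qed
qed

lemma pointwise_bound:
  assumes y: "y \<in> boxQ a n" and n: "n \<ge> 1"
  shows "g y \<le> avgc a n i (\<lambda>z. g z + real n * edge_e a n g i z) y"
proof -
  let ?I = "{a i<..a i + int n}"
  define \<phi> where "\<phi> u = g (y(i:=u))" for u
  let ?psi = "\<lambda>u. if u < a i + int n then \<bar>\<phi> (u+1) - \<phi> u\<bar> else 0"
  define E where "E = (\<Sum>u\<in>?I. ?psi u)"
  have edge: "edge_e a n g i (y(i:=u)) = ?psi u" for u
    unfolding edge_e_def \<phi>_def by simp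
  have yi: "y i \<in> ?I" using y unfolding boxQ_def by auto
  have gy: "g y = \<phi> (y i)" unfolding \<phi>_def by simp
  have bound: "g y - E \<le> \<phi> t" if "t \<in> ?I" for t
    using tele[OF yi that, of \<phi>] gy unfolding E_def by linarith
  have "avgc a n i (\<lambda>z. g z + real n * edge_e a n g i z) y
        = (\<Sum>t\<in>?I. \<phi> t + real n * ?psi t) / n"
    unfolding avgc_def edge by (simp add: \<phi>_def)
  also have "\<dots> = (\<Sum>t\<in>?I. \<phi> t) / n + E"
    using n unfolding E_def by (simp add: sum.distrib sum_distrib_left[symmetric] add_divide_distrib)
  also have "\<dots> \<ge> (\<Sum>t\<in>?I. g y - E) / n + E"
    by (intro add_right_mono divide_right_mono sum_mono bound) auto
  finally have "avgc a n i (\<lambda>z. g z + real n * edge_e a n g i z) y \<ge> (\<Sum>t\<in>?I. g y - E) / n + E" .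
  moreover have "(\<Sum>t\<in>?I. g y - E) / n + E = g y" using n by simp
  ultimately show ?thesis by simp
qed

lemma prod_const_powr:
  assumes "x \<ge> 0"
  shows "(\<Prod>i\<in>(UNIV::'d::finite set). x powr w) = x powr (real CARD('d) * w)"
proof (cases "x = 0")
  case True
  then show ?thesis by simp
next
  case False
  then show ?thesis by (simp add: powr_power)
qed



lemma gagliardo:
  fixes g :: "('d::finite \<Rightarrow> int) \<Rightarrow> real"
  assumes n: "n \<ge> 1" and D: "CARD('d) \<ge> 2" and gnn: "\<And>y. g y \<ge> 0"
  shows "(\<Sum>y\<in>boxQ a n. g y powr (real CARD('d) / (real CARD('d) - 1)))
         \<le> ((\<Sum>y\<in>boxQ a n. g y) / n + Wsum a n g) powr (real CARD('d) / (real CARD('d) - 1))"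
proof -
  let ?D = "real CARD('d)"
  let ?w = "1 / (?D - 1)" and ?q = "?D / (?D - 1)"
  let ?Q = "boxQ a n"
  define N where "N = real (card ?Q)"
  have N: "N = real n ^ CARD('d)" unfolding N_def card_boxQ by simp
  have Npos: "N > 0" unfolding N using n by simp
  have Dg: "?D - 1 > 0" using D by simp
  have qw: "?q = ?D * ?w" by simp
  define h where "h i = avgc a n i (\<lambda>z. g z + real n * edge_e a n g i z)" for i
  have hnn: "h i y \<ge> 0" for i y
    unfolding h_def by (intro avgc_nonneg add_nonneg_nonneg mult_nonneg_nonneg gnn edge_e_nonneg) simp
  have hind: "indepS {i} (h i)" for i
    unfolding h_def by (rule avgc_indep[OF indepS_empty])
  obtain ks :: "'d list" where ks: "set ks = UNIV" using finite_list[of "UNIV :: 'd set"] by auto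
  define M where "M = (\<Sum>y\<in>?Q. g y) / n + Wsum a n g"
  have S1: "(\<Sum>y\<in>?Q. g y powr ?q) \<le> (\<Sum>y\<in>?Q. \<Prod>i\<in>UNIV. h i y powr ?w)"
  proof (rule sum_mono)
    fix y assume y: "y \<in> ?Q"
    have pc: "(\<Prod>i\<in>(UNIV::'d set). g y powr ?w) = g y powr (?D * ?w)"
      by (rule prod_const_powr) (rule gnn)
    have "g y powr ?q = (\<Prod>i\<in>(UNIV::'d set). g y powr ?w)"
      unfolding pc qw by (rule refl)
    also have "\<dots> \<le> (\<Prod>i\<in>UNIV. h i y powr ?w)"
    proof (rule prod_mono)
      fix i
      have "g y \<le> h i y" unfolding h_def by (rule pointwise_bound[OF y n])
      then show "0 \<le> g y powr ?w \<and> g y powr ?w \<le> h i y powr ?w"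
        using Dg gnn[of y] by (simp add: powr_mono2)
    qed
    finally show "g y powr ?q \<le> (\<Prod>i\<in>UNIV. h i y powr ?w)" .
  qed
  have Eh: "Elist a n ks (h i) y0 = (\<Sum>y\<in>?Q. h i y) / N" for i y0
    using sum_eq_card_Elist[OF n ks, where h="h i" and z=y0 and a=a] Npos unfolding N_def by simp
  have Sh: "(\<Sum>y\<in>?Q. h i y) \<le> n * M" for i
  proof -
    have "(\<Sum>y\<in>?Q. h i y) = (\<Sum>y\<in>?Q. g y + real n * edge_e a n g i y)"
      unfolding h_def by (rule sum_avgc[OF n])
    also have "\<dots> = (\<Sum>y\<in>?Q. g y) + real n * (\<Sum>y\<in>?Q. edge_e a n g i y)"
      by (simp add: sum.distrib sum_distrib_left)
    also have "(\<Sum>y\<in>?Q. edge_e a n g i y) \<le> Wsum a n g"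
      unfolding Wsum_def
      by (rule member_le_sum[where f = "\<lambda>i. \<Sum>y\<in>?Q. edge_e a n g i y"]) (auto intro: sum_nonneg edge_e_nonneg)
    then have "(\<Sum>y\<in>?Q. g y) + real n * (\<Sum>y\<in>?Q. edge_e a n g i y) \<le> (\<Sum>y\<in>?Q. g y) + real n * Wsum a n g"
      by (intro add_left_mono mult_left_mono) auto
    also have "\<dots> = n * M" unfolding M_def using n by (simp add: algebra_simps)
    finally show ?thesis .
  qed
  have Mnn: "M \<ge> 0" unfolding M_def Wsum_def
    by (intro add_nonneg_nonneg divide_nonneg_nonneg sum_nonneg gnn edge_e_nonneg) auto
  have "(\<Sum>y\<in>?Q. \<Prod>i\<in>UNIV. h i y powr ?w) = N * Elist a n ks (\<lambda>y. \<Prod>i\<in>UNIV. h i y powr ?w) (a)"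
    using sum_eq_card_Elist[OF n ks] unfolding N_def by blast
  also have "\<dots> \<le> N * (\<Prod>i\<in>UNIV. (Elist a n ks (h i) a) powr ?w)"
    using Npos by (intro mult_left_mono LW_gen[OF n D hnn hind]) auto
  also have "\<dots> = N * (\<Prod>i\<in>UNIV. ((\<Sum>y\<in>?Q. h i y) / N) powr ?w)"
    unfolding Eh ..
  also have "\<dots> \<le> N * (\<Prod>i\<in>(UNIV::'d set). (n * M / N) powr ?w)"
  proof (intro mult_left_mono prod_mono conjI)
    fix i
    show "0 \<le> ((\<Sum>y\<in>?Q. h i y) / N) powr ?w" by simp
    show "((\<Sum>y\<in>?Q. h i y) / N) powr ?w \<le> (n * M / N) powr ?w"
    proof -
      have "0 \<le> (\<Sum>y\<in>?Q. h i y)" by (intro sum_nonneg hnn)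
      then have "0 \<le> (\<Sum>y\<in>?Q. h i y) / N" using Npos by simp
      then show ?thesis
        using Sh[of i] Npos Dg by (intro powr_mono2 divide_right_mono) auto
    qed
  qed (use Npos in auto)
  also have "\<dots> = N * (n * M / N) powr ?q"
    unfolding qw using Npos Mnn by (subst prod_const_powr) auto
  also have "\<dots> = M powr ?q"
  proof -
    have nM: "n * M / N = M / real n powr (?D - 1)"
      unfolding N using n by (simp add: powr_diff powr_realpow)
    have "(real n powr (?D - 1)) powr ?q = real n powr ?D"
      unfolding powr_powr using Dg by simp
    also have "\<dots> = N" unfolding N using n by (simp add: powr_realpow)
    finally have "N * (n * M / N) powr ?q = N * (M powr ?q / N)"
      unfolding nM powr_divide by simp
    then show ?thesis using Npos by simp
  qed
  finally have "(\<Sum>y\<in>?Q. \<Prod>i\<in>UNIV. h i y powr ?w) \<le> M powr ?q" .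
  with S1 show ?thesis unfolding M_def by simp
qed



lemma powr_tangent:
  fixes a b \<gamma> :: real
  assumes b: "0 < b" and ba: "b \<le> a" and g: "1 \<le> \<gamma>"
  shows "a powr \<gamma> - b powr \<gamma> \<le> \<gamma> * a powr (\<gamma> - 1) * (a - b)"
proof -
  define \<psi> where "\<psi> x = a powr \<gamma> - x powr \<gamma> - \<gamma> * a powr (\<gamma> - 1) * (a - x)" for x
  have "\<psi> b \<le> \<psi> a"
  proof (rule DERIV_nonneg_imp_nondecreasing[OF ba])
    fix x assume x: "b \<le> x" "x \<le> a"
    then have xpos: "x > 0" using b by simp
    have "DERIV \<psi> x :> (- (\<gamma> * x powr (\<gamma> - 1)) + \<gamma> * a powr (\<gamma> - 1))"
      unfolding \<psi>_def using xpos
      by (auto intro!: derivative_eq_intros simp: algebra_simps)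
    moreover have "x powr (\<gamma> - 1) \<le> a powr (\<gamma> - 1)"
      using x xpos g by (intro powr_mono2) auto
    then have "- (\<gamma> * x powr (\<gamma> - 1)) + \<gamma> * a powr (\<gamma> - 1) \<ge> 0"
      using g by (simp add: mult_left_mono)
    ultimately show "\<exists>y. DERIV \<psi> x :> y \<and> 0 \<le> y" by blast
  qed
  then show ?thesis unfolding \<psi>_def by simp
qed

lemma powr_tangent0:
  fixes a b \<gamma> :: real
  assumes b: "0 \<le> b" and ba: "b \<le> a" and g: "1 \<le> \<gamma>"
  shows "a powr \<gamma> - b powr \<gamma> \<le> \<gamma> * a powr (\<gamma> - 1) * (a - b)"
proof (cases "b = 0")
  case False
  then show ?thesis using powr_tangent[of b a \<gamma>] assms by simp
next
  case True
  show ?thesis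
  proof (cases "a = 0")
    case True
    then show ?thesis using \<open>b = 0\<close> by simp
  next
    case False
    then have apos: "a > 0" using b ba by simp
    have "a powr \<gamma> = a powr (\<gamma> - 1) * a" using apos by (simp add: powr_diff)
    also have "\<dots> \<le> \<gamma> * (a powr (\<gamma> - 1) * a)"
      using mult_right_mono[OF g, of "a powr (\<gamma> - 1) * a"] apos by simp
    finally show ?thesis using \<open>b = 0\<close> g by (simp add: algebra_simps)
  qed
qed

lemma mvi:
  fixes a b \<gamma> :: real
  assumes "0 \<le> a" "0 \<le> b" "1 \<le> \<gamma>"
  shows "\<bar>a powr \<gamma> - b powr \<gamma>\<bar> \<le> \<gamma> * \<bar>a - b\<bar> * (a powr (\<gamma> - 1) + b powr (\<gamma> - 1))"
proof -
  have key: "\<bar>x powr \<gamma> - y powr \<gamma>\<bar> \<le> \<gamma> * \<bar>x - y\<bar> * (x powr (\<gamma> - 1) + y powr (\<gamma> - 1))"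
    if xy: "0 \<le> y" "y \<le> x" for x y
  proof -
    have "y powr \<gamma> \<le> x powr \<gamma>" using xy assms(3) by (intro powr_mono2) auto
    then have "\<bar>x powr \<gamma> - y powr \<gamma>\<bar> = x powr \<gamma> - y powr \<gamma>" by simp
    also have "\<dots> \<le> \<gamma> * x powr (\<gamma> - 1) * (x - y)" by (rule powr_tangent0[OF xy assms(3)])
    also have "\<dots> \<le> \<gamma> * \<bar>x - y\<bar> * (x powr (\<gamma> - 1) + y powr (\<gamma> - 1))"
    proof -
      have "\<gamma> * \<bar>x - y\<bar> \<ge> 0" using assms(3) by simp
      then have "\<gamma> * \<bar>x - y\<bar> * x powr (\<gamma> - 1) \<le> \<gamma> * \<bar>x - y\<bar> * (x powr (\<gamma> - 1) + y powr (\<gamma> - 1))"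
        by (intro mult_left_mono) auto
      then show ?thesis using xy by (simp add: algebra_simps)
    qed
    finally show ?thesis .
  qed
  show ?thesis
  proof (cases "b \<le> a")
    case True then show ?thesis using key[of b a] assms by simp
  next
    case False
    then have "\<bar>b powr \<gamma> - a powr \<gamma>\<bar> \<le> \<gamma> * \<bar>b - a\<bar> * (b powr (\<gamma> - 1) + a powr (\<gamma> - 1))"
      using key[of a b] assms by simp
    then show ?thesis by (simp add: abs_minus_commute add.commute)
  qed
qed

lemma CS_sqrt:
  fixes u v :: "'i \<Rightarrow> real"
  shows "(\<Sum>i\<in>I. u i * v i) \<le> sqrt (\<Sum>i\<in>I. (u i)\<^sup>2) * sqrt (\<Sum>i\<in>I. (v i)\<^sup>2)"
proof -
  have "(\<Sum>i\<in>I. u i * v i) \<le> \<bar>\<Sum>i\<in>I. u i * v i\<bar>" by simp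
  also have "\<dots> = sqrt ((\<Sum>i\<in>I. u i * v i)\<^sup>2)" by simp
  also have "\<dots> \<le> sqrt ((\<Sum>i\<in>I. (u i)\<^sup>2) * (\<Sum>i\<in>I. (v i)\<^sup>2))"
    by (rule real_sqrt_le_mono) (rule Cauchy_Schwarz_ineq_sum)
  also have "\<dots> = sqrt (\<Sum>i\<in>I. (u i)\<^sup>2) * sqrt (\<Sum>i\<in>I. (v i)\<^sup>2)"
    by (rule real_sqrt_mult)
  finally show ?thesis .
qed

lemma shift_sum:
  fixes F :: "('d::finite \<Rightarrow> int) \<Rightarrow> real"
  assumes F: "\<And>y. F y \<ge> 0"
  shows "(\<Sum>y\<in>boxQ a n. if y i < a i + int n then F (y(i := y i + 1)) else 0) \<le> (\<Sum>y\<in>boxQ a n. F y)"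
proof -
  let ?Q = "boxQ a n"
  let ?A = "{y\<in>?Q. y i < a i + int n}"
  let ?s = "\<lambda>y. y(i := y i + 1)"
  have "(\<Sum>y\<in>?Q. if y i < a i + int n then F (?s y) else 0) = (\<Sum>y\<in>?A. F (?s y))"
    by (rule sum.inter_filter[OF finite_boxQ, symmetric])
  also have "\<dots> = (\<Sum>z\<in>?s ` ?A. F z)"
  proof (rule sum.reindex[symmetric, unfolded comp_def])
    show "inj_on ?s ?A"
    proof (rule inj_onI)
      fix x y assume "x \<in> ?A" "y \<in> ?A" and eq: "x(i := x i + 1) = y(i := y i + 1)"
      show "x = y"
      proof (rule ext)
        fix j
        have "(x(i := x i + 1)) j = (y(i := y i + 1)) j" using eq by simp
        then show "x j = y j" by (cases "j = i") auto
      qed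
    qed
  qed
  also have "\<dots> \<le> (\<Sum>y\<in>?Q. F y)"
  proof (rule sum_mono2[OF finite_boxQ])
    show "?s ` ?A \<subseteq> ?Q"
    proof
      fix z assume "z \<in> ?s ` ?A"
      then obtain y where y: "y \<in> ?Q" "y i < a i + int n" "z = ?s y" by auto
      show "z \<in> ?Q" unfolding boxQ_def
      proof (intro CollectI allI)
        fix j
        have "a j < y j \<and> y j \<le> a j + int n" using y(1) unfolding boxQ_def by simp
        then show "a j < z j \<and> z j \<le> a j + int n" using y(2,3) by (cases "j = i") auto
      qed
    qed
    show "\<And>b. b \<in> ?Q - ?s ` ?A \<Longrightarrow> 0 \<le> F b" using F by simp
  qed
  finally show ?thesis .
qed



definition E2 :: "('d::finite \<Rightarrow> int) \<Rightarrow> nat \<Rightarrow> (('d \<Rightarrow> int) \<Rightarrow> real) \<Rightarrow> real" where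
  "E2 a n f = (\<Sum>i\<in>UNIV. \<Sum>y\<in>boxQ a n. (if y i < a i + int n then (f (y(i := y i + 1)) - f y)\<^sup>2 else 0))"

lemma E2_nonneg[simp]: "E2 a n f \<ge> 0"
  unfolding E2_def by (intro sum_nonneg) auto

lemma powr_sq: "(x powr a)\<^sup>2 = x powr (2 * a)" for x a :: real
  by (simp add: power2_eq_square powr_add[symmetric])

lemma sq_sum_le: "(x + y)\<^sup>2 \<le> 2 * (x\<^sup>2 + y\<^sup>2)" for x y :: real
proof -
  have "0 \<le> (x - y)\<^sup>2" by simp
  then show ?thesis by (simp add: power2_eq_square algebra_simps)
qed

lemma sobolev_box:
  fixes f :: "('d::finite \<Rightarrow> int) \<Rightarrow> real"
  assumes n: "n \<ge> 1" and D3: "CARD('d) \<ge> 3" and fnn: "\<And>y. f y \<ge> 0"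
  shows "(\<Sum>y\<in>boxQ a n. f y powr (2 * real CARD('d) / (real CARD('d) - 2))) powr ((real CARD('d) - 2) / real CARD('d))
     \<le> (2 + 8 * (2 * (real CARD('d) - 1) / (real CARD('d) - 2))\<^sup>2 * real CARD('d))
        * ((\<Sum>y\<in>boxQ a n. (f y)\<^sup>2) / (real n)\<^sup>2 + E2 a n f)"
proof -
  let ?D = "real CARD('d)"
  let ?Q = "boxQ a n"
  define p where "p = 2 * ?D / (?D - 2)"
  define \<gamma> where "\<gamma> = 2 * (?D - 1) / (?D - 2)"
  define q where "q = ?D / (?D - 1)"
  define K where "K = 2 + 8 * \<gamma>\<^sup>2 * ?D"
  have D: "?D \<ge> 3" using D3 by simp
  have D2: "CARD('d) \<ge> 2" using D3 by simp
  have nz1: "?D - 1 \<noteq> 0" and nz2: "?D - 2 \<noteq> 0" and nz0: "?D \<noteq> 0" and pos2: "?D - 2 > 0" using D by auto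
  have g1: "\<gamma> \<ge> 1" unfolding \<gamma>_def using pos2 by (simp add: divide_simps)
  have eq1: "\<gamma> * q = p" unfolding \<gamma>_def q_def p_def using nz1 nz2 by (simp add: divide_simps)
  have eq2: "2 * (\<gamma> - 1) = p" unfolding \<gamma>_def p_def using nz1 nz2 by (simp add: divide_simps)
  have qpos: "q > 0" unfolding q_def using D by simp
  have eq3: "1 / q = 1/2 + (?D - 2) / (2 * ?D)" unfolding q_def using nz1 nz2 nz0 by (simp add: divide_simps)
  define g where "g y = f y powr \<gamma>" for y
  have gnn: "g y \<ge> 0" for y unfolding g_def by simp
  define m where "m = (\<Sum>y\<in>?Q. f y powr p)"
  define L where "L = (\<Sum>y\<in>?Q. (f y)\<^sup>2)"
  have mnn: "m \<ge> 0" unfolding m_def by (intro sum_nonneg) simp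
  have Lnn: "L \<ge> 0" unfolding L_def by (intro sum_nonneg) simp
  have Knn: "K \<ge> 0" unfolding K_def using D by simp
  have G1: "(\<Sum>y\<in>?Q. g y) \<le> sqrt L * sqrt m"
  proof -
    have "(\<Sum>y\<in>?Q. g y) = (\<Sum>y\<in>?Q. f y * f y powr (\<gamma> - 1))"
    proof (rule sum.cong[OF refl])
      fix y
      show "g y = f y * f y powr (\<gamma> - 1)" unfolding g_def using powr_mult_base[OF fnn[of y], of "\<gamma> - 1"] by simp
    qed
    also have "\<dots> \<le> sqrt (\<Sum>y\<in>?Q. (f y)\<^sup>2) * sqrt (\<Sum>y\<in>?Q. (f y powr (\<gamma> - 1))\<^sup>2)"
      by (rule CS_sqrt)
    also have "(\<Sum>y\<in>?Q. (f y powr (\<gamma> - 1))\<^sup>2) = m"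
      unfolding m_def powr_sq eq2 ..
    finally show ?thesis unfolding L_def .
  qed
  define c where "c i y = (y i < a i + int n)" for i y
  define s where "s i y = y(i := y i + 1)" for i :: 'd and y :: "'d \<Rightarrow> int"
  define d where "d iy = (if c (fst iy) (snd iy) then \<bar>f (s (fst iy) (snd iy)) - f (snd iy)\<bar> else 0)" for iy
  define sv where "sv iy = (if c (fst iy) (snd iy) then f (s (fst iy) (snd iy)) powr (\<gamma> - 1) + f (snd iy) powr (\<gamma> - 1) else 0)" for iy
  have G2: "Wsum a n g \<le> \<gamma> * sqrt (E2 a n f) * sqrt (4 * ?D * m)"
  proof -
    have "Wsum a n g = (\<Sum>iy\<in>UNIV \<times> ?Q. edge_e a n g (fst iy) (snd iy))"
      unfolding Wsum_def by (simp add: sum.cartesian_product')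
    also have "\<dots> \<le> (\<Sum>iy\<in>UNIV \<times> ?Q. \<gamma> * (d iy * sv iy))"
    proof (rule sum_mono)
      fix iy :: "'d \<times> ('d \<Rightarrow> int)"
      show "edge_e a n g (fst iy) (snd iy) \<le> \<gamma> * (d iy * sv iy)"
      proof (cases "c (fst iy) (snd iy)")
        case True
        then show ?thesis
          unfolding edge_e_def d_def sv_def g_def using mvi[OF fnn fnn g1, of "s (fst iy) (snd iy)" "snd iy"]
          by (simp add: c_def s_def mult.assoc)
      next
        case False
        then show ?thesis unfolding edge_e_def d_def sv_def c_def by simp
      qed
    qed
    also have "\<dots> = \<gamma> * (\<Sum>iy\<in>UNIV \<times> ?Q. d iy * sv iy)" by (simp add: sum_distrib_left)
    also have "\<dots> \<le> \<gamma> * (sqrt (\<Sum>iy\<in>UNIV \<times> ?Q. (d iy)\<^sup>2) * sqrt (\<Sum>iy\<in>UNIV \<times> ?Q. (sv iy)\<^sup>2))"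
      using g1 by (intro mult_left_mono CS_sqrt) auto
    also have "(\<Sum>iy\<in>UNIV \<times> ?Q. (d iy)\<^sup>2) = E2 a n f"
    proof -
      have "(\<Sum>iy\<in>UNIV \<times> ?Q. (d iy)\<^sup>2) = (\<Sum>i\<in>UNIV. \<Sum>y\<in>?Q. (d (i, y))\<^sup>2)"
        by (simp only: sum.cartesian_product')
      also have "\<dots> = E2 a n f"
        unfolding E2_def d_def c_def s_def by (intro sum.cong refl) simp
      finally show ?thesis .
    qed
    also have "(\<Sum>iy\<in>UNIV \<times> ?Q. (sv iy)\<^sup>2) \<le> 4 * ?D * m"
    proof -
      have "(\<Sum>iy\<in>UNIV \<times> ?Q. (sv iy)\<^sup>2)
            \<le> (\<Sum>iy\<in>UNIV \<times> ?Q. 2 * ((if c (fst iy) (snd iy) then f (s (fst iy) (snd iy)) powr p else 0) + f (snd iy) powr p))"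
      proof (rule sum_mono)
        fix iy :: "'d \<times> ('d \<Rightarrow> int)"
        let ?A = "f (s (fst iy) (snd iy)) powr (\<gamma> - 1)" and ?B = "f (snd iy) powr (\<gamma> - 1)"
        have ab: "(?A + ?B)\<^sup>2 \<le> 2 * (?A\<^sup>2 + ?B\<^sup>2)" by (rule sq_sum_le)
        show "(sv iy)\<^sup>2 \<le> 2 * ((if c (fst iy) (snd iy) then f (s (fst iy) (snd iy)) powr p else 0) + f (snd iy) powr p)"
        proof (cases "c (fst iy) (snd iy)")
          case True
          then show ?thesis using ab unfolding sv_def powr_sq eq2 by simp
        next
          case False
          then show ?thesis unfolding sv_def by simp
        qed
      qed
      also have "\<dots> = 2 * (\<Sum>i\<in>UNIV. (\<Sum>y\<in>?Q. (if y i < a i + int n then f (y(i := y i + 1)) powr p else 0)) + m)"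
      proof -
        define X where "X i y = (if y i < a i + int n then f (y(i := y i + 1)) powr p else 0)" for i :: 'd and y
        have "(\<Sum>iy\<in>UNIV \<times> ?Q. 2 * ((if c (fst iy) (snd iy) then f (s (fst iy) (snd iy)) powr p else 0) + f (snd iy) powr p))
              = (\<Sum>i\<in>UNIV. \<Sum>y\<in>?Q. 2 * (X i y + f y powr p))"
          unfolding sum.cartesian_product' X_def c_def s_def by (simp cong: if_cong)
        also have "\<dots> = 2 * (\<Sum>i\<in>UNIV. (\<Sum>y\<in>?Q. X i y) + m)"
          unfolding m_def by (simp add: sum_distrib_left sum.distrib mult.left_commute)
        finally show ?thesis unfolding X_def .
      qed
      also have "\<dots> \<le> 2 * (\<Sum>i\<in>(UNIV::'d set). m + m)"
        by (intro mult_left_mono sum_mono add_right_mono) (auto simp: m_def intro: shift_sum)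
      also have "\<dots> = 4 * ?D * m" by simp
      finally show ?thesis .
    qed
    then have "sqrt (\<Sum>iy\<in>UNIV \<times> ?Q. (sv iy)\<^sup>2) \<le> sqrt (4 * ?D * m)" by simp
    then have "\<gamma> * (sqrt (E2 a n f) * sqrt (\<Sum>iy\<in>UNIV \<times> ?Q. (sv iy)\<^sup>2)) \<le> \<gamma> * (sqrt (E2 a n f) * sqrt (4 * ?D * m))"
      using g1 E2_nonneg[of a n f] by (intro mult_left_mono) auto
    finally show ?thesis by (simp add: mult.assoc)
  qed
  define S where "S = sqrt L / n + \<gamma> * sqrt (E2 a n f) * sqrt (4 * ?D)"
  have Snn: "S \<ge> 0" unfolding S_def using g1 Lnn by (intro add_nonneg_nonneg mult_nonneg_nonneg divide_nonneg_nonneg) auto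
  have mq: "m = (\<Sum>y\<in>?Q. g y powr q)"
    unfolding m_def g_def powr_powr eq1 ..
  have "m \<le> ((\<Sum>y\<in>?Q. g y) / n + Wsum a n g) powr q"
    unfolding mq q_def by (rule gagliardo[OF n D2 gnn])
  also have "\<dots> \<le> (sqrt m * S) powr q"
  proof (rule powr_mono2)
    show "0 \<le> q" using qpos by simp
    show "0 \<le> (\<Sum>y\<in>?Q. g y) / n + Wsum a n g"
      unfolding Wsum_def by (intro add_nonneg_nonneg divide_nonneg_nonneg sum_nonneg gnn edge_e_nonneg) auto
    have "(\<Sum>y\<in>?Q. g y) / n \<le> sqrt L * sqrt m / n" using G1 by (simp add: divide_right_mono)
    moreover have "sqrt (4 * ?D * m) = sqrt (4 * ?D) * sqrt m" by (simp add: real_sqrt_mult)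
    ultimately show "(\<Sum>y\<in>?Q. g y) / n + Wsum a n g \<le> sqrt m * S"
      using G2 unfolding S_def by (simp add: algebra_simps)
  qed
  finally have m1: "m \<le> (sqrt m * S) powr q" .
  have G4: "m powr (1 / q) \<le> sqrt m * S"
  proof -
    have "m powr (1/q) \<le> ((sqrt m * S) powr q) powr (1/q)"
      using m1 mnn qpos by (intro powr_mono2) auto
    also have "\<dots> = sqrt m * S" unfolding powr_powr using qpos Snn mnn by simp
    finally show ?thesis .
  qed
  have G5: "m powr ((?D - 2) / ?D) \<le> S\<^sup>2"
  proof (cases "m = 0")
    case True
    then show ?thesis by simp
  next
    case False
    then have mpos: "m > 0" using mnn by simp
    have "m powr (1/q) = sqrt m * m powr ((?D - 2) / (2 * ?D))"
      unfolding eq3 powr_add using powr_half_sqrt[OF mnn] by simp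
    then have "sqrt m * m powr ((?D - 2) / (2 * ?D)) \<le> sqrt m * S" using G4 by simp
    then have le: "m powr ((?D - 2) / (2 * ?D)) \<le> S" using mpos by simp
    have "m powr ((?D - 2) / ?D) = (m powr ((?D - 2) / (2 * ?D)))\<^sup>2"
    proof -
      have "2 * ((?D - 2) / (2 * ?D)) = (?D - 2) / ?D" using nz0 by (simp add: divide_simps)
      then show ?thesis unfolding powr_sq by simp
    qed
    also have "\<dots> \<le> S\<^sup>2" using le by (intro power_mono) auto
    finally show ?thesis .
  qed
  have G6: "S\<^sup>2 \<le> K * (L / (real n)\<^sup>2 + E2 a n f)"
  proof -
    let ?x = "sqrt L / n" and ?y = "\<gamma> * sqrt (E2 a n f) * sqrt (4 * ?D)"
    have "S\<^sup>2 \<le> 2 * ?x\<^sup>2 + 2 * ?y\<^sup>2" unfolding S_def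
      using sq_sum_le[of ?x ?y] by simp
    also have "?x\<^sup>2 = L / (real n)\<^sup>2" using Lnn by (simp add: power_divide)
    also have "?y\<^sup>2 = \<gamma>\<^sup>2 * E2 a n f * (4 * ?D)" using E2_nonneg[of a n f] D by (simp add: power_mult_distrib)
    also have "2 * (L / (real n)\<^sup>2) + 2 * (\<gamma>\<^sup>2 * E2 a n f * (4 * ?D)) \<le> K * (L / (real n)\<^sup>2 + E2 a n f)"
    proof -
      have a1: "2 * (L / (real n)\<^sup>2) \<le> K * (L / (real n)\<^sup>2)"
        using Lnn D unfolding K_def by (intro mult_right_mono) auto
      have a2: "2 * (\<gamma>\<^sup>2 * E2 a n f * (4 * ?D)) \<le> K * E2 a n f"
        using E2_nonneg[of a n f] D unfolding K_def by (simp add: algebra_simps mult_right_mono)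
      show ?thesis using a1 a2 by (simp add: algebra_simps)
    qed
    finally show ?thesis .
  qed
  show ?thesis using G5 G6 unfolding m_def L_def K_def p_def \<gamma>_def by simp
qed



definition ax :: "nat \<Rightarrow> ('d::finite \<Rightarrow> int) \<Rightarrow> ('d \<Rightarrow> int)" where
  "ax n x = (\<lambda>i. int n * x i - int ((n + 1) div 2))"

lemma half_lemma:
  fixes k :: int and n :: nat
  shows "(- real n / 2 < real_of_int k \<and> real_of_int k \<le> real n / 2)
         \<longleftrightarrow> (- int ((n + 1) div 2) < k \<and> k \<le> - int ((n + 1) div 2) + int n)"
proof -
  have "(- real n / 2 < real_of_int k) \<longleftrightarrow> (- int n < 2 * k)"
  proof -
    have "(- real n / 2 < real_of_int k) \<longleftrightarrow> (- real n < 2 * real_of_int k)" by auto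
    also have "\<dots> \<longleftrightarrow> (- int n < 2 * k)" by linarith
    finally show ?thesis .
  qed
  moreover have "(real_of_int k \<le> real n / 2) \<longleftrightarrow> (2 * k \<le> int n)"
  proof -
    have "(real_of_int k \<le> real n / 2) \<longleftrightarrow> (2 * real_of_int k \<le> real n)" by auto
    also have "\<dots> \<longleftrightarrow> (2 * k \<le> int n)" by linarith
    finally show ?thesis .
  qed
  moreover have "(- int n < 2 * k \<and> 2 * k \<le> int n) \<longleftrightarrow> (- int ((n + 1) div 2) < k \<and> k \<le> - int ((n + 1) div 2) + int n)"
  proof (cases "even n")
    case True
    then obtain j where "n = 2 * j" by blast
    then show ?thesis by simp
  next
    case False
    then obtain j where "n = 2 * j + 1" using oddE by blast
    then show ?thesis by (simp, presburger)
  qed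
  ultimately show ?thesis by simp
qed

lemma block_key:
  "(- real n / 2 < real_of_int (y i) - real n * real_of_int (x i) \<and> real_of_int (y i) - real n * real_of_int (x i) \<le> real n / 2)
   \<longleftrightarrow> (int n * x i - int ((n + 1) div 2) < y i \<and> y i \<le> int n * x i - int ((n + 1) div 2) + int n)"
proof -
  have e: "real_of_int (y i) - real n * real_of_int (x i) = real_of_int (y i - int n * x i)" by simp
  show ?thesis unfolding e half_lemma by linarith
qed

lemma block_eq: "block n x = boxQ (ax n x) n"
  unfolding block_def boxQ_def cube_def ax_def mem_Collect_eq block_key ..

lemma block_disj:
  assumes n: "n \<ge> 1" and y: "y \<in> block n x" "y \<in> block n x'"
  shows "x = x'"
proof (rule ext)
  fix i
  let ?c = "int ((n + 1) div 2)"
  have "int n * x i - ?c < y i \<and> y i \<le> int n * x i - ?c + int n"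
    using y(1) unfolding block_eq boxQ_def ax_def by simp
  moreover have "int n * x' i - ?c < y i \<and> y i \<le> int n * x' i - ?c + int n"
    using y(2) unfolding block_eq boxQ_def ax_def by simp
  ultimately have "int n * (x i - x' i) < int n" "int n * (x' i - x i) < int n"
    by (simp_all add: algebra_simps)
  then have "x i - x' i < 1" "x' i - x i < 1" using n
    by (metis mult.right_neutral mult_less_cancel_left_pos of_nat_0_less_iff less_le_trans zero_less_one)+
  then show "x i = x' i" by simp
qed



lemma sum_le_infsum_ennreal:
  fixes g :: "'a \<Rightarrow> ennreal"
  assumes "finite U" "U \<subseteq> V"
  shows "sum g U \<le> infsum g V"
proof -
  have "sum g U = infsum g U" using assms(1) by simp
  also have "\<dots> \<le> infsum g V"
  proof (rule infsum_mono_neutral)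
    show "g summable_on U" by (rule nonneg_summable_on_complete) simp
    show "g summable_on V" by (rule nonneg_summable_on_complete) simp
  qed (use assms(2) in auto)
  finally show ?thesis .
qed

lemma finite_block: "finite (block n x)"
  unfolding block_eq by (rule finite_boxQ)

lemma block_bound:
  fixes f :: "('d::finite \<Rightarrow> int) \<Rightarrow> real"
  assumes n: "n \<ge> 1" and D3: "CARD('d) \<ge> 3" and fnn: "\<And>y. f y \<ge> 0"
    and lt: "block_mass n f x < T"
  shows "block_mass n f x \<le> T powr (1 - 2 / crit_exp CARD('d))
           * ((2 + 8 * (2 * (real CARD('d) - 1) / (real CARD('d) - 2))\<^sup>2 * real CARD('d))
              * ((\<Sum>y\<in>block n x. (f y)\<^sup>2) / (real n)\<^sup>2 + E2 (ax n x) n f))"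
proof -
  let ?D = "real CARD('d)"
  define K where "K = 2 + 8 * (2 * (?D - 1) / (?D - 2))\<^sup>2 * ?D"
  define R where "R = (\<Sum>y\<in>block n x. (f y)\<^sup>2) / (real n)\<^sup>2 + E2 (ax n x) n f"
  define m where "m = block_mass n f x"
  define e1 where "e1 = 1 - 2 / crit_exp CARD('d)"
  define e2 where "e2 = (?D - 2) / ?D"
  have D: "?D \<ge> 3" using D3 by simp
  have e12: "e1 + e2 = 1" unfolding e1_def e2_def crit_exp_def using D by (simp add: divide_simps)
  have e1nn: "e1 \<ge> 0" unfolding e1_def crit_exp_def using D by (simp add: divide_simps)
  have mnn: "m \<ge> 0" unfolding m_def block_mass_def by (intro sum_nonneg) simp
  have Knn: "K \<ge> 0" unfolding K_def using D by simp
  have Rnn: "R \<ge> 0" unfolding R_def by (intro add_nonneg_nonneg divide_nonneg_nonneg sum_nonneg) auto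
  have sob: "m powr e2 \<le> K * R"
    using sobolev_box[OF n D3 fnn, where a="ax n x"]
    unfolding m_def block_mass_def block_eq K_def R_def e2_def crit_exp_def by simp
  have "m \<le> T powr e1 * m powr e2"
  proof (cases "m = 0")
    case True then show ?thesis by simp
  next
    case False
    then have mpos: "m > 0" using mnn by simp
    have "m = m powr e1 * m powr e2" using mpos e12 by (simp add: powr_add[symmetric])
    also have "\<dots> \<le> T powr e1 * m powr e2"
      using lt mnn e1nn unfolding m_def by (intro mult_right_mono powr_mono2) auto
    finally show ?thesis .
  qed
  also have "\<dots> \<le> T powr e1 * (K * R)"
    using sob by (intro mult_left_mono) auto
  finally show ?thesis unfolding m_def e1_def K_def R_def .
qed

lemma upd_neq:
  fixes y :: "'d \<Rightarrow> int"
  assumes "y(i := y i + 1) = y(j := y j + 1)"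
  shows "i = j"
proof (rule ccontr)
  assume "i \<noteq> j"
  then have "(y(i := y i + 1)) i = y i + 1" "(y(j := y j + 1)) i = y i" by simp_all
  with assms show False by simp
qed

lemma nbr_upd: "lattice_nbr (y(i := y i + 1)) y"
proof -
  have "(\<Sum>j\<in>UNIV. ((y(i := y i + 1)) j - y j)\<^sup>2) = (\<Sum>j\<in>UNIV. if j = i then 1 else 0)"
    by (intro sum.cong refl) simp
  also have "\<dots> = 1" by simp
  finally show ?thesis unfolding lattice_nbr_def .
qed



lemma energy_bound:
  fixes f :: "('d::finite \<Rightarrow> int) \<Rightarrow> real"
  assumes n: "n \<ge> 1" and F: "finite F" and D3: "CARD('d) \<ge> 3"
  shows "ennreal (\<Sum>x\<in>F. E2 (ax n x) n f) \<le> ennreal (2 * real CARD('d)) * energy f"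
proof -
  define C where "C z = (snd (snd z) (fst (snd z)) < ax n (fst z) (fst (snd z)) + int n)"
    for z :: "('d \<Rightarrow> int) \<times> 'd \<times> ('d \<Rightarrow> int)"
  define G where "G z = (f ((snd (snd z))(fst (snd z) := snd (snd z) (fst (snd z)) + 1)) - f (snd (snd z)))\<^sup>2"
    for z :: "('d \<Rightarrow> int) \<times> 'd \<times> ('d \<Rightarrow> int)"
  define \<phi> where "\<phi> z = ((snd (snd z))(fst (snd z) := snd (snd z) (fst (snd z)) + 1), snd (snd z))"
    for z :: "('d \<Rightarrow> int) \<times> 'd \<times> ('d \<Rightarrow> int)"
  define Sg where "Sg = (SIGMA x:F. (UNIV :: 'd set) \<times> block n x)"
  define P where "P = {z \<in> Sg. C z}"
  have finSg: "finite Sg" unfolding Sg_def using F finite_block by (intro finite_SigmaI) auto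
  have finP: "finite P" unfolding P_def using finSg by simp
  have "(\<Sum>x\<in>F. E2 (ax n x) n f) = (\<Sum>x\<in>F. \<Sum>iy\<in>UNIV \<times> block n x. if C (x, iy) then G (x, iy) else 0)"
    unfolding E2_def block_eq C_def G_def by (simp add: sum.cartesian_product' cong: if_cong)
  also have "\<dots> = (\<Sum>z\<in>Sg. if C z then G z else 0)"
    unfolding Sg_def using F finite_block
    by (subst sum.Sigma) (auto simp: case_prod_beta' intro!: finite_cartesian_product finite_block cong: if_cong)
  also have "\<dots> = (\<Sum>z\<in>P. G z)"
    unfolding P_def by (rule sum.inter_filter[OF finSg, symmetric])
  also have "\<dots> = (\<Sum>q\<in>\<phi> ` P. (f (fst q) - f (snd q))\<^sup>2)"
  proof -
    have inj: "inj_on \<phi> P"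
    proof (rule inj_onI)
      fix z z' assume z: "z \<in> P" and z': "z' \<in> P" and eq: "\<phi> z = \<phi> z'"
      obtain x i y where zz: "z = (x, i, y)" by (cases z) auto
      obtain x' i' y' where zz': "z' = (x', i', y')" by (cases z') auto
      have yy: "y = y'" using eq unfolding \<phi>_def zz zz' by simp
      then have "y(i := y i + 1) = y(i' := y i' + 1)" using eq unfolding \<phi>_def zz zz' by simp
      then have ii: "i = i'" by (rule upd_neq)
      have "y \<in> block n x" "y \<in> block n x'" using z z' yy unfolding P_def Sg_def zz zz' by auto
      then have "x = x'" by (rule block_disj[OF n])
      then show "z = z'" using zz zz' yy ii by simp
    qed
    have "(\<Sum>q\<in>\<phi> ` P. (f (fst q) - f (snd q))\<^sup>2) = (\<Sum>z\<in>P. (f (fst (\<phi> z)) - f (snd (\<phi> z)))\<^sup>2)"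
      by (subst sum.reindex[OF inj]) simp
    also have "\<dots> = (\<Sum>z\<in>P. G z)" unfolding G_def \<phi>_def by simp
    finally show ?thesis by simp
  qed
  finally have Beq: "(\<Sum>x\<in>F. E2 (ax n x) n f) = (\<Sum>q\<in>\<phi> ` P. (f (fst q) - f (snd q))\<^sup>2)" .
  have sub: "\<phi> ` P \<subseteq> {(y, z). lattice_nbr y z}"
    unfolding \<phi>_def using nbr_upd by auto
  have "ennreal (\<Sum>x\<in>F. E2 (ax n x) n f) = (\<Sum>q\<in>\<phi> ` P. ennreal ((f (fst q) - f (snd q))\<^sup>2))"
    unfolding Beq by (rule sum_ennreal[symmetric]) simp
  also have "\<dots> \<le> (\<Sum>\<^sub>\<infinity>q\<in>{(y, z). lattice_nbr y z}. ennreal ((f (fst q) - f (snd q))\<^sup>2))"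
    by (rule sum_le_infsum_ennreal[OF finite_imageI[OF finP] sub])
  also have "\<dots> = ennreal (2 * real CARD('d)) * energy f"
  proof -
    have "ennreal (2 * real CARD('d)) * ennreal (1 / (2 * real CARD('d))) = 1"
      using D3 by (simp add: ennreal_mult[symmetric])
    then show ?thesis unfolding energy_def by (simp add: mult.assoc[symmetric])
  qed
  finally show ?thesis .
qed

lemma l2_bound:
  fixes f :: "('d::finite \<Rightarrow> int) \<Rightarrow> real"
  assumes n: "n \<ge> 1" and F: "finite F"
  shows "ennreal (\<Sum>x\<in>F. \<Sum>y\<in>block n x. (f y)\<^sup>2) \<le> l2sq f"
proof -
  have disj: "\<forall>x\<in>F. \<forall>x'\<in>F. x \<noteq> x' \<longrightarrow> block n x \<inter> block n x' = {}"
    using block_disj[OF n] by blast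
  have "(\<Sum>x\<in>F. \<Sum>y\<in>block n x. (f y)\<^sup>2) = (\<Sum>y\<in>\<Union>(block n ` F). (f y)\<^sup>2)"
    by (rule sum.UNION_disjoint[symmetric]) (use F finite_block disj in auto)
  then have "ennreal (\<Sum>x\<in>F. \<Sum>y\<in>block n x. (f y)\<^sup>2) = (\<Sum>y\<in>\<Union>(block n ` F). ennreal ((f y)\<^sup>2))"
    by simp
  also have "\<dots> \<le> l2sq f"
    unfolding l2sq_def by (rule sum_le_infsum_ennreal) (use F finite_block in auto)
  finally show ?thesis .
qed



theorem lemma4p2:
  assumes "CARD('d::finite) \<ge> 3"
  shows "\<exists>c::real. \<forall>(n::nat) (\<delta>::real) (f::('d \<Rightarrow> int) \<Rightarrow> real).
           n \<ge> 1 \<longrightarrow> \<delta> > 0 \<longrightarrow> (\<forall>y. f y \<ge> 0) \<longrightarrow>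
           (\<Sum>\<^sub>\<infinity>x\<in>UNIV - Xset n f \<delta>. ennreal (block_mass n f x))
             \<le> ennreal (c * (\<delta> powr crit_exp CARD('d) * real n powr (real CARD('d) + crit_exp CARD('d)))
                        powr (1 - 2 / crit_exp CARD('d)))
               * (ennreal (1 / (real n)\<^sup>2) * l2sq f + energy f)"
proof -
  let ?D = "real CARD('d)"
  define K where "K = 2 + 8 * (2 * (?D - 1) / (?D - 2))\<^sup>2 * ?D"
  define c where "c = K * (2 * ?D)"
  have D: "?D \<ge> 3" using assms by simp
  have Knn: "K \<ge> 0" unfolding K_def using D by simp
  show ?thesis
  proof (intro exI[of _ c] allI impI)
    fix n :: nat and \<delta> :: real and f :: "('d \<Rightarrow> int) \<Rightarrow> real"
    assume n: "n \<ge> 1" and \<delta>: "\<delta> > 0" and fnn0: "\<forall>y. f y \<ge> 0"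
    have fnn: "\<And>y. f y \<ge> 0" using fnn0 by simp
    define T where "T = \<delta> powr crit_exp CARD('d) * real n powr (real CARD('d) + crit_exp CARD('d))"
    define T' where "T' = T powr (1 - 2 / crit_exp CARD('d))"
    have T'nn: "T' \<ge> 0" unfolding T'_def by simp
    define L where "L x = (\<Sum>y\<in>block n x. (f y)\<^sup>2)" for x
    define Eb where "Eb x = E2 (ax n x) n f" for x
    have bmnn: "block_mass n f x \<ge> 0" for x unfolding block_mass_def by (intro sum_nonneg) simp
    have bb: "block_mass n f x \<le> T' * (K * (L x / (real n)\<^sup>2 + Eb x))" if "x \<in> UNIV - Xset n f \<delta>" for x
    proof -
      have lt: "block_mass n f x < T" using that unfolding Xset_def T_def by auto
      show ?thesis
        unfolding T'_def K_def L_def Eb_def by (rule block_bound[where f=f, OF n assms fnn lt])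
    qed
    have "(\<Sum>\<^sub>\<infinity>x\<in>UNIV - Xset n f \<delta>. ennreal (block_mass n f x))
          \<le> ennreal (c * T') * (ennreal (1 / (real n)\<^sup>2) * l2sq f + energy f)"
    proof (rule infsum_le_finite_sums)
      show "(\<lambda>x. ennreal (block_mass n f x)) summable_on UNIV - Xset n f \<delta>"
        by (rule nonneg_summable_on_complete) simp
      fix F assume F: "finite F" "F \<subseteq> UNIV - Xset n f \<delta>"
      define A where "A = (\<Sum>x\<in>F. L x)"
      define B where "B = (\<Sum>x\<in>F. Eb x)"
      have Ann: "A \<ge> 0" unfolding A_def L_def by (intro sum_nonneg) simp
      have Bnn: "B \<ge> 0" unfolding B_def Eb_def by (intro sum_nonneg) simp
      have s1: "(\<Sum>x\<in>F. ennreal (block_mass n f x)) = ennreal (\<Sum>x\<in>F. block_mass n f x)"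
        by (rule sum_ennreal) (rule bmnn)
      have s2: "(\<Sum>x\<in>F. block_mass n f x) \<le> (T' * K) * ((1 / (real n)\<^sup>2) * A + B)"
      proof -
        have "(\<Sum>x\<in>F. block_mass n f x) \<le> (\<Sum>x\<in>F. T' * (K * (L x / (real n)\<^sup>2 + Eb x)))"
          using F(2) by (intro sum_mono bb) auto
        also have "\<dots> = (T' * K) * ((1 / (real n)\<^sup>2) * A + B)"
          unfolding A_def B_def
          by (simp add: sum_distrib_left sum.distrib sum_divide_distrib algebra_simps)
        finally show ?thesis .
      qed
      have s3: "ennreal A \<le> l2sq f" unfolding A_def L_def by (rule l2_bound[OF n F(1)])
      have s4: "ennreal B \<le> ennreal (2 * ?D) * energy f" unfolding B_def Eb_def by (rule energy_bound[OF n F(1) assms])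
      have "(\<Sum>x\<in>F. ennreal (block_mass n f x)) \<le> ennreal ((T' * K) * ((1 / (real n)\<^sup>2) * A + B))"
        unfolding s1 by (rule ennreal_leI[OF s2])
      also have "\<dots> = ennreal (T' * K) * (ennreal (1 / (real n)\<^sup>2) * ennreal A + ennreal B)"
      proof -
        have e: "ennreal (1 / (real n)\<^sup>2) * ennreal A = ennreal (1 / (real n)\<^sup>2 * A)"
          by (rule ennreal_mult[symmetric]) (simp_all add: Ann)
        show ?thesis unfolding e
          using T'nn Knn Ann Bnn by (simp add: ennreal_mult ennreal_plus del: times_divide_eq_left divide_inverse)
      qed
      also have "\<dots> \<le> ennreal (T' * K) * (ennreal (1 / (real n)\<^sup>2) * l2sq f + ennreal (2 * ?D) * energy f)"
        by (intro mult_left_mono add_mono s3 s4) auto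
      also have "\<dots> \<le> ennreal (T' * K) * (ennreal (2 * ?D) * (ennreal (1 / (real n)\<^sup>2) * l2sq f + energy f))"
      proof (intro mult_left_mono)
        have one: "1 \<le> ennreal (2 * ?D)" using D by simp
        have "ennreal (1 / (real n)\<^sup>2) * l2sq f \<le> ennreal (2 * ?D) * (ennreal (1 / (real n)\<^sup>2) * l2sq f)"
          using mult_right_mono[OF one, of "ennreal (1 / (real n)\<^sup>2) * l2sq f"] by simp
        then show "ennreal (1 / (real n)\<^sup>2) * l2sq f + ennreal (2 * ?D) * energy f
              \<le> ennreal (2 * ?D) * (ennreal (1 / (real n)\<^sup>2) * l2sq f + energy f)"
          by (simp add: distrib_left)
      qed simp
      also have "\<dots> = ennreal (c * T') * (ennreal (1 / (real n)\<^sup>2) * l2sq f + energy f)"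
      proof -
        have "ennreal (c * T') = ennreal (T' * K) * ennreal (2 * ?D)"
          unfolding c_def using T'nn Knn D by (simp add: ennreal_mult[symmetric] mult_ac)
        then show ?thesis by (simp add: mult.assoc)
      qed
      finally show "(\<Sum>x\<in>F. ennreal (block_mass n f x)) \<le> ennreal (c * T') * (ennreal (1 / (real n)\<^sup>2) * l2sq f + energy f)" .
    qed
    then show "(\<Sum>\<^sub>\<infinity>x\<in>UNIV - Xset n f \<delta>. ennreal (block_mass n f x))
             \<le> ennreal (c * (\<delta> powr crit_exp CARD('d) * real n powr (real CARD('d) + crit_exp CARD('d)))
                        powr (1 - 2 / crit_exp CARD('d)))
               * (ennreal (1 / (real n)\<^sup>2) * l2sq f + energy f)"
      unfolding T'_def T_def .
  qed
qed


end
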